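(* Let $f\equiv 1$ and let $g:(0,1]\to(0,\infty)$ be arbitrary. Then the voting scheme $(f,g)$ is not fair for all sample sizes $k$: there exists $k\ge 1$ such that, with sample size $k$, the fairness condition $v_i=v_{i_1}+v_{i_2}$ fails for some network, node and splitting ratio.
   Context: A network consists of $N$ nodes with weights $m_1,\dots,m_N>0$, $\sum_{i=1}^N m_i=1$. A voting scheme is a pair of functions $(f,g)$ from $(0,1]$ to $(0,\infty)$. In each query round a node samples $k\ge 1$ nodes independently with replacement, node $j$ being chosen with probability $p_j=f(m_j)/\sum_{i=1}^N f(m_i)$; each opinion of node $j$ is weighted by $g_j=g(m_j)$. The voting power of node $i$ is $$v_i=\sum_{\mathbf y\in\mathbb N^N:\ y_1+\dots+y_N=k}\frac{k!}{y_1!\cdots y_N!}\,\frac{y_i g_i}{\sum_{n=1}^N y_n g_n}\prod_{j=1}^N p_j^{y_j},$$ where $\mathbb N=\{0,1,2,\dots\}$. Splitting: node $i$ of weight $m_i$ is replaced by two nodes $i_1,i_2$ of weights $x m_i$ and $(1-x)m_i$, $x\in(0,1)$, all other nodes unchanged; $v_{i_1},v_{i_2}$ denote the voting powers in the new network (with the same $k$). The scheme is fair for sample size $k$ if $v_i=v_{i_1}+v_{i_2}$ for every network, every node $i$ and every $x\in(0,1)$. *)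

theory Defs
  imports Complex_Main
begin

definition network :: "nat \<Rightarrow> (nat \<Rightarrow> real) \<Rightarrow> bool" where
  "network N m \<longleftrightarrow> (\<forall>i<N. 0 < m i) \<and> (\<Sum>i<N. m i) = 1"

definition occ :: "nat \<Rightarrow> nat \<Rightarrow> (nat \<Rightarrow> nat) set" where
  "occ N k = {y. (\<forall>j\<ge>N. y j = 0) \<and> (\<Sum>j<N. y j) = k}"

definition prob :: "(real \<Rightarrow> real) \<Rightarrow> nat \<Rightarrow> (nat \<Rightarrow> real) \<Rightarrow> nat \<Rightarrow> real" where
  "prob f N m j = f (m j) / (\<Sum>i<N. f (m i))"

definition vpower :: "(real \<Rightarrow> real) \<Rightarrow> (real \<Rightarrow> real) \<Rightarrow> nat \<Rightarrow> nat \<Rightarrow> (nat \<Rightarrow> real) \<Rightarrow> nat \<Rightarrow> real" where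
  "vpower f g N k m i =
     (\<Sum>y\<in>occ N k. (fact k / (\<Prod>j<N. fact (y j)))
        * (real (y i) * g (m i) / (\<Sum>n<N. real (y n) * g (m n)))
        * (\<Prod>j<N. prob f N m j ^ y j))"

text \<open>Splitting node i (of an N-node network) with ratio x: node i_1 keeps index i and gets
  weight x * m i, node i_2 is appended with index N and weight (1-x) * m i.\<close>
definition split_node :: "nat \<Rightarrow> (nat \<Rightarrow> real) \<Rightarrow> nat \<Rightarrow> real \<Rightarrow> (nat \<Rightarrow> real)" where
  "split_node N m i x = m(i := x * m i, N := (1 - x) * m i)"

definition fair :: "(real \<Rightarrow> real) \<Rightarrow> (real \<Rightarrow> real) \<Rightarrow> nat \<Rightarrow> bool" where
  "fair f g k \<longleftrightarrow>
     (\<forall>N m i x. network N m \<and> i < N \<and> 0 < x \<and> x < 1 \<longrightarrow>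
        vpower f g N k m i =
          vpower f g (Suc N) k (split_node N m i x) i + vpower f g (Suc N) k (split_node N m i x) N)"

end

theory Submission
  imports Defs
begin

definition ev :: "nat \<Rightarrow> nat \<Rightarrow> nat" where "ev j = (\<lambda>n. if n = j then 1 else 0)"

lemma occ1: "occ N 1 = ev ` {..<N}"
proof
  show "ev ` {..<N} \<subseteq> occ N 1"
    by (auto simp: occ_def ev_def sum.delta)
next
  show "occ N 1 \<subseteq> ev ` {..<N}"
  proof
    fix y assume y: "y \<in> occ N 1"
    hence z: "\<forall>j\<ge>N. y j = 0" and s: "(\<Sum>j<N. y j) = 1" by (auto simp: occ_def)
    have "\<exists>j<N. y j \<noteq> 0" using s by (metis (mono_tags, lifting) lessThan_iff sum.neutral zero_neq_one)
    then obtain j where j: "j < N" "y j \<noteq> 0" by blast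
    have "(\<Sum>n<N. y n) = y j + (\<Sum>n\<in>{..<N}-{j}. y n)"
      using j by (simp add: sum.remove)
    hence yj: "y j = 1" and rest: "(\<Sum>n\<in>{..<N}-{j}. y n) = 0" using s j by linarith+
    have "\<forall>n\<in>{..<N}-{j}. y n = 0" using rest by simp
    have "y n = ev j n" for n
    proof (cases "n < N")
      case True thus ?thesis using \<open>\<forall>n\<in>{..<N}-{j}. y n = 0\<close> yj by (auto simp: ev_def)
    next
      case False thus ?thesis using z j by (auto simp: ev_def)
    qed
    hence "y = ev j" by blast
    thus "y \<in> ev ` {..<N}" using j by auto
  qed
qed

lemma inj_ev: "inj ev"
  unfolding inj_def ev_def by (metis zero_neq_one)

lemma vp1:
  assumes "i < N" "g (m i) \<noteq> 0"
  shows "vpower (\<lambda>_. 1) g N 1 m i = 1 / real N"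
proof -
  have trm: "(fact 1 / (\<Prod>j<N. fact (ev k j)))
        * (real (ev k i) * g (m i) / (\<Sum>n<N. real (ev k n) * g (m n)))
        * (\<Prod>j<N. prob (\<lambda>_. 1) N m j ^ ev k j) = (if k = i then 1 / real N else 0)"
    if k: "k < N" for k
  proof -
    have p1: "(\<Prod>j<N. (fact (ev k j)::real)) = 1"
      by (rule prod.neutral) (simp add: ev_def)
    have p2: "(\<Prod>j<N. prob (\<lambda>_. 1) N m j ^ ev k j) = 1 / real N"
    proof -
      have "(\<Prod>j<N. prob (\<lambda>_. 1) N m j ^ ev k j) = (\<Prod>j<N. if j = k then 1 / real N else 1)"
        by (rule prod.cong) (auto simp: ev_def prob_def)
      also have "\<dots> = 1 / real N" using k by (simp add: prod.delta)
      finally show ?thesis .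
    qed
    have s: "(\<Sum>n<N. real (ev k n) * g (m n)) = g (m k)"
      proof -
      have "(\<Sum>n<N. real (ev k n) * g (m n)) = (\<Sum>n<N. if n = k then g (m n) else 0)"
        by (rule sum.cong) (auto simp: ev_def)
      thus ?thesis using k by (simp add: sum.delta)
    qed
    have e: "real (ev k i) = (if k = i then 1 else 0)" by (simp add: ev_def)
    show ?thesis using assms by (simp add: p1 p2 s e)
  qed
  have "vpower (\<lambda>_. 1) g N 1 m i = (\<Sum>k<N. (if k = i then 1 / real N else 0))"
    unfolding vpower_def occ1 sum.reindex[OF inj_on_subset[OF inj_ev subset_UNIV]]
    by (rule sum.cong) (simp_all only: trm lessThan_iff o_def)
  also have "\<dots> = 1 / real N" using assms by simp
  finally show ?thesis .
qed

theorem theorem2: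
  fixes g :: "real \<Rightarrow> real"
  assumes "\<forall>t. 0 < t \<and> t \<le> 1 \<longrightarrow> 0 < g t"
  shows "\<exists>k\<ge>1. \<not> fair (\<lambda>_. 1) g k"
proof (intro exI conjI)
  show "(1::nat) \<le> 1" by simp
  define m :: "nat \<Rightarrow> real" where "m = (\<lambda>_. 1/2)"
  have net: "network 2 m" by (simp add: network_def m_def)
  let ?m' = "split_node 2 m 0 (1/2)"
  have gh: "g (1/2) \<noteq> 0" using assms[rule_format, of "1/2"] by simp
  have g1: "g (m 0) \<noteq> 0" using gh by (simp add: m_def)
  have g2: "g (?m' 0) \<noteq> 0" using assms[rule_format, of "1/4"] by (simp add: m_def split_node_def)
  have g3: "g (?m' 2) \<noteq> 0" using assms[rule_format, of "1/4"] by (simp add: m_def split_node_def)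
  have a: "vpower (\<lambda>_. 1) g 2 1 m 0 = 1/2" using vp1[of 0 2 g m, OF _ g1] by simp
  have b: "vpower (\<lambda>_. 1) g 3 1 ?m' 0 = 1/3" using vp1[of 0 3 g ?m', OF _ g2] by simp
  have c: "vpower (\<lambda>_. 1) g 3 1 ?m' 2 = 1/3" using vp1[of 2 3 g ?m', OF _ g3] by simp
  show "\<not> fair (\<lambda>_. 1) g 1"
    unfolding fair_def
    apply (rule notI)
    apply (drule spec[of _ 2], drule spec[of _ m], drule spec[of _ 0], drule spec[of _ "1/2"])
    using net a b c by (simp add: numeral_3_eq_3 numeral_2_eq_2)
qed

end
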